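(* Let $\mathcal{E}\subset\mathbf{P}^3$ be an elliptic quadric over $\mathbf{F}_q$ (the surface $x_0x_3-Q(x_1,x_2)=0$ with $Q$ an irreducible quadratic form over $\mathbf{F}_q$), let $s$ be an integer with $s<q-1$, and let $X=\mathcal{E}\cap\mathcal{S}$ where $\mathcal{S}\subset\mathbf{P}^3$ is a surface of degree $s$ defined over $\mathbf{F}_q$ not containing $\mathcal{E}$. Then $\sharp X(\mathbf{F}_q)\le s(q+1)$.
   Context: $X(\mathbf{F}_q)$ denotes the set of $\mathbf{F}_q$-rational points of $X$. *)

theory Defs
  imports Main "HOL-Library.Cardinality"
begin

type_synonym 'a pt4 = "'a \<times> 'a \<times> 'a \<times> 'a"

text \<open>Exponent vectors of monomials x0^e0 x1^e1 x2^e2 x3^e3 in four variables.\<close>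
type_synonym mon4 = "nat \<times> nat \<times> nat \<times> nat"

text \<open>A polynomial in x0..x3 over 'a is a coefficient function on monomials
  (with finite support).\<close>
type_synonym 'a mpoly4 = "mon4 \<Rightarrow> 'a"

fun mdeg :: "mon4 \<Rightarrow> nat" where
  "mdeg (e0, e1, e2, e3) = e0 + e1 + e2 + e3"

fun madd :: "mon4 \<Rightarrow> mon4 \<Rightarrow> mon4" where
  "madd (a0, a1, a2, a3) (b0, b1, b2, b3) = (a0 + b0, a1 + b1, a2 + b2, a3 + b3)"

fun mon_eval :: "mon4 \<Rightarrow> 'a::comm_ring_1 pt4 \<Rightarrow> 'a" where
  "mon_eval (e0, e1, e2, e3) (x0, x1, x2, x3) = x0 ^ e0 * x1 ^ e1 * x2 ^ e2 * x3 ^ e3"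

definition monomials_of_deg :: "nat \<Rightarrow> mon4 set" where
  "monomials_of_deg s = {m. mdeg m = s}"

definition homog_poly :: "nat \<Rightarrow> 'a::zero mpoly4 \<Rightarrow> bool" where
  "homog_poly s F \<longleftrightarrow> (\<forall>m. F m \<noteq> 0 \<longrightarrow> mdeg m = s)"

definition heval :: "nat \<Rightarrow> 'a::comm_ring_1 mpoly4 \<Rightarrow> 'a pt4 \<Rightarrow> 'a" where
  "heval s F x = (\<Sum>m\<in>monomials_of_deg s. F m * mon_eval m x)"

definition pmult :: "'a::comm_ring_1 mpoly4 \<Rightarrow> 'a mpoly4 \<Rightarrow> 'a mpoly4" where
  "pmult P G m = (\<Sum>(i, j)\<in>{(i, j). madd i j = m}. P i * G j)"

definition pdvd :: "'a::comm_ring_1 mpoly4 \<Rightarrow> 'a mpoly4 \<Rightarrow> bool" where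
  "pdvd P F \<longleftrightarrow> (\<exists>H. finite {m. H m \<noteq> 0} \<and> F = pmult P H)"

text \<open>The binary quadratic form Q(x1,x2) = a x1^2 + b x1 x2 + c x2^2 is irreducible
  over the field: it is not a product of two linear forms with coefficients
  in the field (this also excludes Q = 0).\<close>
definition irred_qform :: "'a::comm_ring_1 \<Rightarrow> 'a \<Rightarrow> 'a \<Rightarrow> bool" where
  "irred_qform a b c \<longleftrightarrow>
     \<not> (\<exists>u v w z. a = u * w \<and> b = u * z + v * w \<and> c = v * z)"

definition quadric_poly :: "'a::comm_ring_1 \<Rightarrow> 'a \<Rightarrow> 'a \<Rightarrow> 'a mpoly4" where
  "quadric_poly a b c m =
     (if m = (1, 0, 0, 1) then 1
      else if m = (0, 2, 0, 0) then - a
      else if m = (0, 1, 1, 0) then - b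
      else if m = (0, 0, 2, 0) then - c
      else 0)"

fun smult4 :: "'a::times \<Rightarrow> 'a pt4 \<Rightarrow> 'a pt4" where
  "smult4 t (x0, x1, x2, x3) = (t * x0, t * x1, t * x2, t * x3)"

definition proj_points3 :: "'a::field pt4 set set" where
  "proj_points3 = {{smult4 t x | t. t \<noteq> 0} | x. x \<noteq> (0, 0, 0, 0)}"

definition X_points :: "'a::field \<Rightarrow> 'a \<Rightarrow> 'a \<Rightarrow> nat \<Rightarrow> 'a mpoly4 \<Rightarrow> 'a pt4 set set" where
  "X_points a b c s F =
     {P \<in> proj_points3. \<forall>x\<in>P. heval 2 (quadric_poly a b c) x = 0 \<and> heval s F x = 0}"

end

theory Submission
  imports Defs "HOL-Algebra.Algebraic_Closure_Type" "HOL-Computational_Algebra.Polynomial"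
begin


lemma fermat_ff:
  fixes x :: "'a::{finite,field}"
  shows "x ^ CARD('a) = x"
proof (cases "x = 0")
  case True then show ?thesis by (simp add: zero_power)
next
  case False
  let ?U = "UNIV - {0::'a}"
  have fin: "finite ?U" by simp
  have "(\<Prod>y\<in>?U. x * y) = (\<Prod>y\<in>?U. y)"
  proof (rule prod.reindex_bij_witness[of _ "\<lambda>y. y / x" "\<lambda>y. x * y"])
  qed (use False in auto)
  moreover have "(\<Prod>y\<in>?U. x * y) = x ^ card ?U * (\<Prod>y\<in>?U. y)"
    by (simp add: prod.distrib)
  moreover have "(\<Prod>y\<in>?U. y) \<noteq> 0" by (simp add: prod_zero_iff)
  ultimately have "x ^ card ?U = 1" by simp
  moreover have "card ?U = CARD('a) - 1" by (simp add: card_Diff_singleton)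
  moreover have "CARD('a) \<ge> 1" by (simp add: Suc_leI)
  ultimately show ?thesis
    by (metis Suc_diff_1 less_le_trans less_numeral_extra(1) mult.right_neutral power_Suc)
qed

lemma card_ge2: "CARD('a::{finite,field}) \<ge> 2"
proof -
  have "{0::'a, 1} \<subseteq> UNIV" by simp
  hence "card {0::'a,1} \<le> CARD('a)" by (rule card_mono[OF finite_class.finite_UNIV])
  thus ?thesis by simp
qed

lemma binom_vanish:
  fixes dummy :: "'a::{finite,field}"
  assumes "0 < k" "k < CARD('a)"
  shows "(of_nat (CARD('a) choose k) :: 'a) = 0"
proof -
  define q where "q = CARD('a)"
  define pp :: "'a poly" where "pp = (\<Sum>i\<in>{1..<q}. monom (of_nat (q choose i)) i)"
  have ev: "poly pp x = 0" for x :: 'a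
  proof -
    have "(x + 1) ^ q = (\<Sum>i\<le>q. of_nat (q choose i) * x ^ i * 1 ^ (q - i))"
      by (rule binomial_ring)
    also have "\<dots> = (\<Sum>i\<in>insert 0 (insert q {1..<q}). of_nat (q choose i) * x ^ i)"
      by (intro sum.cong) auto
    also have "\<dots> = 1 + (x ^ q + poly pp x)"
      using card_ge2[where 'a='a] by (simp add: pp_def poly_sum poly_monom q_def)
    finally have "(x + 1) ^ q = 1 + (x ^ q + poly pp x)" .
    moreover have "(x+1)^q = x + 1" "x ^ q = x" unfolding q_def by (rule fermat_ff)+
    ultimately show ?thesis by simp
  qed
  have "pp = 0"
  proof (rule ccontr)
    assume nz: "pp \<noteq> 0"
    have "degree pp \<le> q - 1"
      unfolding pp_def by (intro degree_sum_le) (auto intro: order.trans[OF degree_monom_le])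
    moreover have "card {x. poly pp x = 0} \<le> degree pp" by (rule card_poly_roots_bound[OF nz])
    moreover have "{x. poly pp x = 0} = UNIV" using ev by auto
    ultimately show False using card_ge2[where 'a='a] unfolding q_def by simp
  qed
  hence "coeff pp k = 0" by simp
  moreover have "coeff pp k = of_nat (q choose k)"
    using assms unfolding pp_def q_def by (simp add: coeff_sum coeff_monom)
  ultimately show ?thesis by (simp add: q_def)
qed




type_synonym 'a L = "'a alg_closure"

lemma frob_add:
  fixes x y :: "'a::{finite,field} alg_closure"
  shows "(x + y) ^ CARD('a) = x ^ CARD('a) + y ^ CARD('a)"
proof -
  define q where "q = CARD('a)"
  have q2: "q \<ge> 2" unfolding q_def by (rule card_ge2)
  have bz: "(of_nat (q choose k) :: 'a alg_closure) = 0" if "0 < k" "k < q" for k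
  proof -
    have "(of_nat (q choose k) :: 'a alg_closure) = to_ac (of_nat (q choose k) :: 'a)" by simp
    also have "(of_nat (q choose k) :: 'a) = 0" using binom_vanish[of k, where 'a='a] that unfolding q_def by simp
    finally show ?thesis by simp
  qed
  have "(x + y) ^ q = (\<Sum>k\<le>q. of_nat (q choose k) * x ^ k * y ^ (q - k))"
    by (rule binomial_ring)
  also have "\<dots> = (\<Sum>k\<in>{0, q}. of_nat (q choose k) * x ^ k * y ^ (q - k))"
    by (rule sum.mono_neutral_right) (use bz in auto)
  also have "\<dots> = x ^ q + y ^ q" using q2 by simp
  finally show ?thesis unfolding q_def .
qed

lemma frob_diff:
  fixes x y :: "'a::{finite,field} alg_closure"
  shows "(x - y) ^ CARD('a) = x ^ CARD('a) - y ^ CARD('a)"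
  using frob_add[of "x - y" y] by simp

lemma frob_to_ac: "(to_ac x) ^ CARD('a) = to_ac (x::'a::{finite,field})"
  by (metis fermat_ff to_ac_power)

lemma alg_closure_infinite: "infinite (UNIV :: 'a::field alg_closure set)"
proof
  assume fin: "finite (UNIV :: 'a alg_closure set)"
  define p :: "'a alg_closure poly" where "p = (\<Prod>x\<in>UNIV. [:-x, 1:]) + 1"
  have d: "degree (\<Prod>x\<in>(UNIV::'a alg_closure set). [:-x, 1:]) = card (UNIV :: 'a alg_closure set)"
    by (subst degree_prod_eq_sum_degree) auto
  have "card (UNIV :: 'a alg_closure set) > 0" using fin by (simp add: finite_UNIV_card_ge_0)
  hence "degree p > 0" unfolding p_def using d by (subst degree_add_eq_left) auto
  then obtain r where "poly p r = 0" using alg_closed_imp_poly_has_root by blast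
  moreover have "poly (\<Prod>x\<in>(UNIV::'a alg_closure set). [:-x, 1:]) r = 0"
    by (simp add: poly_prod prod_zero_iff fin)
  ultimately show False unfolding p_def by simp
qed

locale ell =
  fixes a b c :: "'a::{finite,field}"
  assumes irr: "irred_qform a b c"
begin

lemma a_nz: "a \<noteq> 0"
proof
  assume "a = 0"
  hence "a = 0 * b \<and> b = 0 * c + 1 * b \<and> c = 1 * c" by simp
  thus False using irr unfolding irred_qform_def by blast
qed

lemma no_root: "a * t^2 + b * t + c \<noteq> 0"
proof
  assume h: "a * t^2 + b * t + c = 0"
  have "a = 1 * a \<and> b = 1 * (a * t + b) + (-t) * a \<and> c = (-t) * (a * t + b)"
    using h by (simp add: algebra_simps power2_eq_square) (metis add.commute add_diff_cancel_left' diff_0 diff_diff_eq2)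
  thus False using irr unfolding irred_qform_def by blast
qed

lemma aniso: "a * x1^2 + b * x1 * x2 + c * x2^2 = 0 \<Longrightarrow> x1 = 0 \<and> x2 = 0"
proof -
  assume h: "a * x1^2 + b * x1 * x2 + c * x2^2 = 0"
  show ?thesis
  proof (cases "x2 = 0")
    case True thus ?thesis using h a_nz by simp
  next
    case False
    have "a * (x1/x2)^2 + b * (x1/x2) + c = (a * x1^2 + b * x1 * x2 + c * x2^2) / x2^2"
      using False by (simp add: field_simps power2_eq_square)
    hence "a * (x1/x2)^2 + b * (x1/x2) + c = 0" using h by simp
    with no_root show ?thesis by blast
  qed
qed

definition q :: nat where "q = CARD('a)"

lemma q2: "q \<ge> 2" unfolding q_def by (rule card_ge2)

definition \<omega> :: "'a alg_closure" where
  "\<omega> = (SOME x. to_ac a * x^2 + to_ac b * x + to_ac c = 0)"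

lemma \<omega>_root: "to_ac a * \<omega>^2 + to_ac b * \<omega> + to_ac c = 0"
proof -
  define f where "f = (\<lambda>k::nat. if k = 0 then to_ac c else if k = 1 then to_ac b else to_ac a)"
  have "\<exists>x. (\<Sum>k\<le>2. f k * x ^ k) = 0"
    by (rule alg_closed) (auto simp: f_def a_nz)
  then obtain x where "(\<Sum>k\<le>2. f k * x ^ k) = 0" by blast
  hence "to_ac a * x^2 + to_ac b * x + to_ac c = 0"
    by (simp add: f_def numeral_2_eq_2 atMost_Suc algebra_simps)
  thus ?thesis unfolding \<omega>_def by (rule someI)
qed

lemma \<omega>_notin: "\<omega> \<noteq> to_ac t"
proof
  assume "\<omega> = to_ac t"
  hence "to_ac (a * t^2 + b * t + c) = 0" using \<omega>_root by simp
  hence "a * t^2 + b * t + c = 0" by (simp only: to_ac_eq_0_iff)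
  thus False using no_root by blast
qed

definition \<omega>' where "\<omega>' = \<omega> ^ q"

lemma \<omega>'_root: "to_ac a * \<omega>'^2 + to_ac b * \<omega>' + to_ac c = 0"
proof -
  have "(to_ac a * \<omega>^2 + to_ac b * \<omega> + to_ac c) ^ q = to_ac a * \<omega>'^2 + to_ac b * \<omega>' + to_ac c"
    unfolding q_def \<omega>'_def
    by (simp add: frob_add power_mult_distrib frob_to_ac flip: power_mult) (simp add: power_mult mult.commute)
  moreover have "(0::'a alg_closure)^q = 0" using q2 by simp
  ultimately show ?thesis using \<omega>_root by simp
qed

lemma \<omega>'_ne: "\<omega>' \<noteq> \<omega>"
proof
  assume e: "\<omega>' = \<omega>"
  define p :: "'a alg_closure poly" where "p = monom 1 q + [:0, -1:]"
  have dp: "degree p = q" unfolding p_def using q2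
    by (subst degree_add_eq_left) (auto simp: degree_monom_eq)
  hence pnz: "p \<noteq> 0" using q2 by auto
  have sub: "insert \<omega> (range to_ac) \<subseteq> {x. poly p x = 0}"
    using e by (auto simp: p_def poly_monom \<omega>'_def q_def frob_to_ac)
  have "card (insert \<omega> (range (to_ac :: 'a \<Rightarrow> _))) = Suc q"
    using \<omega>_notin by (subst card_insert_disjoint) (auto simp: card_image inj_to_ac q_def)
  moreover have "card (insert \<omega> (range (to_ac :: 'a \<Rightarrow> _))) \<le> card {x. poly p x = 0}"
    by (rule card_mono[OF poly_roots_finite[OF pnz] sub])
  moreover have "card {x. poly p x = 0} \<le> q" using card_poly_roots_bound[OF pnz] dp by simp
  ultimately show False by simp
qed

lemma vieta1: "to_ac b = - to_ac a * (\<omega> + \<omega>')"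
proof -
  have "(to_ac a * \<omega>^2 + to_ac b * \<omega> + to_ac c) - (to_ac a * \<omega>'^2 + to_ac b * \<omega>' + to_ac c) = 0"
    using \<omega>_root \<omega>'_root by simp
  hence "to_ac a * (\<omega>^2 - \<omega>'^2) + to_ac b * (\<omega> - \<omega>') = 0"
    by (simp add: algebra_simps)
  hence "(\<omega> - \<omega>') * (to_ac a * (\<omega> + \<omega>') + to_ac b) = 0"
    by (simp add: algebra_simps power2_eq_square)
  hence "to_ac a * (\<omega> + \<omega>') + to_ac b = 0" using \<omega>'_ne by simp
  thus ?thesis by (metis add.commute add_eq_0_iff2 distrib_left mult_minus_left)
qed

lemma vieta2: "to_ac c = to_ac a * \<omega> * \<omega>'"
  using \<omega>_root vieta1 by (simp add: algebra_simps power2_eq_square)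

end



definition bh :: "nat \<Rightarrow> nat \<Rightarrow> nat \<Rightarrow> 'b::comm_ring_1 poly poly \<Rightarrow> bool" where
  "bh ni nj k A \<longleftrightarrow> (\<forall>i j. coeff (coeff A j) i \<noteq> 0 \<longrightarrow> i \<le> ni \<and> j \<le> nj \<and> i + j = k)"

lemma bh_mult:
  assumes "bh ni nj k A" "bh ni' nj' k' B"
  shows "bh (ni+ni') (nj+nj') (k+k') (A*B)"
  unfolding bh_def
proof (intro allI impI)
  fix i j
  assume nz: "coeff (coeff (A * B) j) i \<noteq> 0"
  have "coeff (coeff (A * B) j) i = (\<Sum>u\<le>j. \<Sum>v\<le>i. coeff (coeff A u) v * coeff (coeff B (j-u)) (i-v))"
    by (simp add: coeff_mult coeff_sum)
  with nz obtain u v where uv: "u \<le> j" "v \<le> i" "coeff (coeff A u) v * coeff (coeff B (j-u)) (i-v) \<noteq> 0"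
    by (metis (no_types, lifting) atMost_iff sum.neutral)
  hence "coeff (coeff A u) v \<noteq> 0" "coeff (coeff B (j-u)) (i-v) \<noteq> 0" by auto
  with assms have "v \<le> ni \<and> u \<le> nj \<and> v + u = k" "i - v \<le> ni' \<and> j - u \<le> nj' \<and> (i-v) + (j-u) = k'"
    unfolding bh_def by blast+
  with uv show "i \<le> ni + ni' \<and> j \<le> nj + nj' \<and> i + j = k + k'" by auto
qed

lemma bh_add: "bh ni nj k A \<Longrightarrow> bh ni nj k B \<Longrightarrow> bh ni nj k (A + B)"
  unfolding bh_def by (metis add.right_neutral coeff_add)

lemma bh_uminus: "bh ni nj k A \<Longrightarrow> bh ni nj k (- A)"
  unfolding bh_def by simp

lemma bh_diff: "bh ni nj k A \<Longrightarrow> bh ni nj k B \<Longrightarrow> bh ni nj k (A - B)"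
  using bh_add[OF _ bh_uminus] by (metis diff_conv_add_uminus)

lemma bh_mono: "bh ni nj k A \<Longrightarrow> ni \<le> ni' \<Longrightarrow> nj \<le> nj' \<Longrightarrow> bh ni' nj' k A"
  unfolding bh_def by fastforce

lemma bh_one: "bh 0 0 0 1"
  unfolding bh_def by (auto simp: coeff_1 split: if_splits)

lemma bh_const: "bh 0 0 0 [:[:c:]:]"
  unfolding bh_def by (auto simp: coeff_pCons split: nat.splits)

lemma bh_X: "bh 1 0 1 [:[:0,1:]:]"
  unfolding bh_def by (auto simp: coeff_pCons split: nat.splits)

lemma bh_Y: "bh 0 1 1 [:0,1:]"
  unfolding bh_def by (auto simp: coeff_pCons split: nat.splits)

lemma bh_X': "bh 1 1 1 [:[:0,1:]:]" by (rule bh_mono[OF bh_X]) auto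
lemma bh_Y': "bh 1 1 1 [:0,1:]" by (rule bh_mono[OF bh_Y]) auto

lemma bh_power: assumes "bh ni nj k A" shows "bh (ni*e) (nj*e) (k*e) (A^e)"
proof (induction e)
  case 0 show ?case using bh_one by simp
next
  case (Suc e)
  from bh_mult[OF assms Suc.IH] show ?case by (simp add: add.commute)
qed

context ell
begin

definition d where "d = \<omega> - \<omega>'"

lemma d_nz: "d \<noteq> 0" using \<omega>'_ne unfolding d_def by simp

definition cL :: "'a alg_closure \<Rightarrow> 'a alg_closure poly poly" where "cL x = [:[:x:]:]"
definition Xv :: "'a alg_closure poly poly" where "Xv = [:[:0,1:]:]"
definition Yv :: "'a alg_closure poly poly" where "Yv = [:0,1:]"
definition x2p where "x2p = cL (1/d) * (Yv - Xv)"
definition x1p where "x1p = Xv + cL \<omega> * x2p"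
definition x3p where "x3p = cL (to_ac a) * Xv * Yv"

definition hevalL :: "nat \<Rightarrow> 'a mpoly4 \<Rightarrow> 'a alg_closure pt4 \<Rightarrow> 'a alg_closure" where
  "hevalL s F x = (\<Sum>m\<in>monomials_of_deg s. to_ac (F m) * mon_eval m x)"

definition Pp :: "nat \<Rightarrow> 'a mpoly4 \<Rightarrow> 'a alg_closure poly poly" where
  "Pp s F = (\<Sum>m\<in>monomials_of_deg s. cL (to_ac (F m)) * mon_eval m (1, x1p, x2p, x3p))"

lemma poly_mon_eval: "poly (mon_eval m (A, B, C, D)) r = mon_eval m (poly A r, poly B r, poly C r, poly D r)"
  by (cases m) (simp add: poly_mult poly_power)

lemma ev_x2p: "poly (poly x2p r) z = (poly r z - z) / d"
  unfolding x2p_def cL_def Xv_def Yv_def by (simp add: diff_divide_distrib)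
lemma ev_x1p: "poly (poly x1p r) z = z + \<omega> * ((poly r z - z) / d)"
  unfolding x1p_def using ev_x2p by (simp add: cL_def Xv_def)
lemma ev_x3p: "poly (poly x3p r) z = to_ac a * z * poly r z"
  unfolding x3p_def cL_def Xv_def Yv_def by simp

lemma eval_P:
  "poly (poly (Pp s F) r) z =
     hevalL s F (1, z + \<omega> * ((poly r z - z) / d), (poly r z - z) / d, to_ac a * z * poly r z)"
  unfolding Pp_def hevalL_def
  by (simp only: poly_sum poly_mult poly_mon_eval ev_x1p ev_x2p ev_x3p cL_def poly_1 poly_pCons
     mult_zero_right add_0_right poly_0)

lemma bh_x2p: "bh 1 1 1 x2p"
proof -
  have "bh (0+1) (0+1) (0+1) x2p" unfolding x2p_def cL_def
    unfolding Yv_def Xv_def by (intro bh_mult bh_const bh_diff bh_Y' bh_X')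
  thus ?thesis by simp
qed

lemma bh_x1p: "bh 1 1 1 x1p"
proof -
  have "bh (0+1) (0+1) (0+1) (cL \<omega> * x2p)" unfolding cL_def by (intro bh_mult bh_const bh_x2p)
  thus ?thesis unfolding x1p_def Xv_def by (intro bh_add bh_mono[OF bh_X]) auto
qed

lemma bh_x3p: "bh 1 1 2 x3p"
proof -
  have "bh (0+1+0) (0+0+1) (0+1+1) x3p" unfolding x3p_def cL_def Xv_def Yv_def
    by (intro bh_mult bh_const bh_X bh_Y)
  thus ?thesis by (simp add: numeral_2_eq_2)
qed

lemma bh_term:
  "bh (e1+e2+e3) (e1+e2+e3) (e1+e2+2*e3) (cL cc * mon_eval (e0,e1,e2,e3) (1, x1p, x2p, x3p))"
proof -
  have "bh (0 + (0*e0 + 1*e1 + 1*e2 + 1*e3)) (0 + (0*e0 + 1*e1 + 1*e2 + 1*e3)) (0 + (0*e0 + 1*e1 + 1*e2 + 2*e3))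
     (cL cc * (1^e0 * x1p^e1 * x2p^e2 * x3p^e3))"
    unfolding cL_def
    by (intro bh_mult bh_const bh_power bh_one bh_x1p bh_x2p bh_x3p)
  thus ?thesis by (simp add: mult.assoc)
qed

lemma P_bnd:
  assumes "coeff (coeff (Pp s F) j) i \<noteq> 0"
  shows "i \<le> s \<and> j \<le> s"
proof -
  have "coeff (coeff (Pp s F) j) i =
     (\<Sum>m\<in>monomials_of_deg s. coeff (coeff (cL (to_ac (F m)) * mon_eval m (1, x1p, x2p, x3p)) j) i)"
    unfolding Pp_def by (simp add: coeff_sum)
  with assms obtain m where m: "m \<in> monomials_of_deg s"
    "coeff (coeff (cL (to_ac (F m)) * mon_eval m (1, x1p, x2p, x3p)) j) i \<noteq> 0"
    by (metis (no_types, lifting) sum.neutral)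
  obtain e0 e1 e2 e3 where me: "m = (e0,e1,e2,e3)" by (cases m) auto
  from bh_term[of e1 e2 e3 "to_ac (F m)" e0] m me have "i \<le> e1+e2+e3 \<and> j \<le> e1+e2+e3"
    unfolding bh_def by blast
  moreover have "e0 + e1 + e2 + e3 = s" using m(1) me by (simp add: monomials_of_deg_def)
  ultimately show ?thesis by simp
qed

lemma P_top:
  assumes "F (0,0,0,s) = 0"
  shows "coeff (coeff (Pp s F) s) s = 0"
proof -
  have "coeff (coeff (Pp s F) s) s =
     (\<Sum>m\<in>monomials_of_deg s. coeff (coeff (cL (to_ac (F m)) * mon_eval m (1, x1p, x2p, x3p)) s) s)"
    unfolding Pp_def by (simp add: coeff_sum)
  also have "\<dots> = 0"
  proof (rule sum.neutral, rule ballI, rule ccontr)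
    fix m assume m: "m \<in> monomials_of_deg s"
      "coeff (coeff (cL (to_ac (F m)) * mon_eval m (1, x1p, x2p, x3p)) s) s \<noteq> 0"
    obtain e0 e1 e2 e3 where me: "m = (e0,e1,e2,e3)" by (cases m) auto
    from bh_term[of e1 e2 e3 "to_ac (F m)" e0] m me have "s \<le> e1+e2+e3 \<and> s + s = e1+e2+2*e3"
      unfolding bh_def by blast
    moreover have "e0 + e1 + e2 + e3 = s" using m(1) me by (simp add: monomials_of_deg_def)
    ultimately have "m = (0,0,0,s)" using me by auto
    with m(2) assms show False by (simp add: cL_def)
  qed
  finally show ?thesis .
qed

end

lemma poly_sum_upto:
  fixes p :: "'b::comm_ring_1 poly"
  assumes "degree p \<le> N"
  shows "poly p x = (\<Sum>i\<le>N. coeff p i * x ^ i)"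
proof -
  have "poly p x = (\<Sum>i\<le>degree p. coeff p i * x ^ i)" by (rule poly_altdef)
  also have "\<dots> = (\<Sum>i\<le>N. coeff p i * x ^ i)"
    by (rule sum.mono_neutral_left) (use assms in \<open>auto simp: coeff_eq_0\<close>)
  finally show ?thesis .
qed

lemma coeff_monom1_mult: "coeff (monom 1 n * (p::'b::comm_ring_1 poly)) k = (if k < n then 0 else coeff p (k - n))"
  by (simp add: coeff_monom_mult)

lemma G_coeff:
  fixes P :: "'b::comm_ring_1 poly poly"
  assumes bnd: "\<And>i j. coeff (coeff P j) i \<noteq> 0 \<Longrightarrow> i \<le> s \<and> j \<le> s"
    and sq: "s < q" and Aq: "A < q"
  shows "coeff (poly P (monom 1 q)) (A + q * B) = coeff (coeff P B) A"
proof -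
  define N where "N = degree P + B"
  have "poly P (monom 1 q) = (\<Sum>j\<le>N. coeff P j * monom 1 q ^ j)"
    by (rule poly_sum_upto) (simp add: N_def)
  also have "\<dots> = (\<Sum>j\<le>N. monom 1 (q * j) * coeff P j)"
    by (simp add: monom_power mult.commute)
  finally have "coeff (poly P (monom 1 q)) (A + q * B) =
     (\<Sum>j\<le>N. coeff (monom 1 (q * j) * coeff P j) (A + q * B))"
    by (simp add: coeff_sum)
  also have "\<dots> = (\<Sum>j\<le>N. if A + q * B < q * j then 0 else coeff (coeff P j) (A + q * B - q * j))"
    by (simp only: coeff_monom1_mult)
  also have "\<dots> = (\<Sum>j\<in>{B}. if A + q * B < q * j then 0 else coeff (coeff P j) (A + q * B - q * j))"
  proof (rule sum.mono_neutral_right)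
    show "\<forall>j\<in>{..N} - {B}. (if A + q * B < q * j then 0 else coeff (coeff P j) (A + q * B - q * j)) = 0"
    proof
      fix j assume j: "j \<in> {..N} - {B}"
      show "(if A + q * B < q * j then 0 else coeff (coeff P j) (A + q * B - q * j)) = 0"
      proof (cases "j < B")
        case True
        then obtain t where "B = Suc (j + t)" using less_imp_Suc_add[OF True] by blast
        hence "A + q * B - q * j = A + q + q * t" by (simp add: algebra_simps)
        hence "\<not> (A + q * B - q * j \<le> s)" using sq by simp
        hence "coeff (coeff P j) (A + q * B - q * j) = 0" using bnd by blast
        thus ?thesis by simp
      next
        case False
        with j have "j \<ge> Suc B" by auto
        hence "q * Suc B \<le> q * j" by (rule mult_le_mono2)
        hence "A + q * B < q * j" using Aq by simp
        thus ?thesis by simp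
      qed
    qed
  qed (auto simp: N_def)
  finally show ?thesis by simp
qed

lemma G_props:
  fixes P :: "'b::comm_ring_1 poly poly"
  assumes bnd: "\<And>i j. coeff (coeff P j) i \<noteq> 0 \<Longrightarrow> i \<le> s \<and> j \<le> s"
    and sq: "s < q"
  shows "degree (poly P (monom 1 q)) \<le> s + q * s"
    and "P \<noteq> 0 \<Longrightarrow> poly P (monom 1 q) \<noteq> 0"
    and "coeff (poly P (monom 1 q)) (s + q * s) = coeff (coeff P s) s"
proof -
  have q0: "q > 0" using sq by simp
  show "degree (poly P (monom 1 q)) \<le> s + q * s"
  proof (rule degree_le, intro allI impI)
    fix k assume k: "s + q * s < k"
    have kk: "k = k mod q + q * (k div q)" by simp
    have "coeff (poly P (monom 1 q)) k = coeff (coeff P (k div q)) (k mod q)"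
      using G_coeff[of P s q "k mod q" "k div q"] bnd sq q0 kk by (metis mod_less_divisor)
    also have "\<dots> = 0"
    proof (rule ccontr)
      assume "coeff (coeff P (k div q)) (k mod q) \<noteq> 0"
      from bnd[OF this] have "k mod q \<le> s" "k div q \<le> s" by auto
      hence "q * (k div q) \<le> q * s" by simp
      with \<open>k mod q \<le> s\<close> kk k show False by linarith
    qed
    finally show "coeff (poly P (monom 1 q)) k = 0" .
  qed
  show "coeff (poly P (monom 1 q)) (s + q * s) = coeff (coeff P s) s"
    using G_coeff[of P s q s s] bnd sq by blast
  assume "P \<noteq> 0"
  then obtain j where "coeff P j \<noteq> 0" by (metis leading_coeff_0_iff)
  then obtain i where ij: "coeff (coeff P j) i \<noteq> 0" by (metis leading_coeff_0_iff)
  with bnd have "i < q" using sq by fastforce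
  have "coeff (poly P (monom 1 q)) (i + q*j) = coeff (coeff P j) i"
    using G_coeff[of P s q i j] bnd sq \<open>i < q\<close> by blast
  with ij show "poly P (monom 1 q) \<noteq> 0" by auto
qed




definition rhom :: "('b::comm_ring_1 \<Rightarrow> 'c::comm_ring_1) \<Rightarrow> bool" where
  "rhom f \<longleftrightarrow> (\<forall>x y. f (x + y) = f x + f y) \<and> (\<forall>x y. f (x * y) = f x * f y) \<and> f 1 = 1"

lemma hom_add: "rhom f \<Longrightarrow> f (x + y) = f x + f y" unfolding rhom_def by blast
lemma hom_mult: "rhom f \<Longrightarrow> f (x * y) = f x * f y" unfolding rhom_def by blast
lemma hom_1: "rhom f \<Longrightarrow> f 1 = 1" unfolding rhom_def by blast
lemma hom_0: "rhom f \<Longrightarrow> f 0 = 0" using hom_add[of f 0 0] by simp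
lemma hom_uminus: "rhom f \<Longrightarrow> f (- x) = - f x"
  using hom_add[of f x "-x"] hom_0[of f] by (simp add: eq_neg_iff_add_eq_0 add.commute)
lemma hom_diff: "rhom f \<Longrightarrow> f (x - y) = f x - f y"
  using hom_add[of f x "-y"] hom_uminus[of f y] by simp
lemma hom_sum: "rhom f \<Longrightarrow> f (sum g A) = (\<Sum>x\<in>A. f (g x))"
  by (induction A rule: infinite_finite_induct) (auto simp: hom_0 hom_add)
lemma hom_power: "rhom f \<Longrightarrow> f (x ^ n) = f x ^ n"
  by (induction n) (auto simp: hom_1 hom_mult)

lemma map_poly_add_hom: "rhom f \<Longrightarrow> map_poly f (p + q) = map_poly f p + map_poly f q"
  by (rule poly_eqI) (simp add: coeff_map_poly hom_0 hom_add)

lemma map_poly_mult_hom: "rhom f \<Longrightarrow> map_poly f (p * q) = map_poly f p * map_poly f q"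
  by (rule poly_eqI) (simp add: coeff_map_poly hom_0 coeff_mult hom_sum hom_mult)

lemma hom_map_poly: "rhom f \<Longrightarrow> rhom (\<lambda>p. poly (map_poly f p) x)"
  unfolding rhom_def[of "\<lambda>p. poly (map_poly f p) x"]
  by (simp add: map_poly_add_hom map_poly_mult_hom hom_1)

lemma hom_to_ac: "rhom to_ac" unfolding rhom_def by simp

lemma poly_map_monom: "rhom f \<Longrightarrow> poly (map_poly f (monom c n)) x = f c * x ^ n"
  by (simp add: map_poly_monom hom_0 poly_monom)

lemma nz_lift:
  fixes ev :: "'y \<Rightarrow> 'b::zero \<Rightarrow> 'a::field alg_closure"
  assumes ev0: "\<And>y. ev y 0 = 0" and evnz: "\<And>c. c \<noteq> 0 \<Longrightarrow> \<exists>y. ev y c \<noteq> 0" and p: "p \<noteq> 0"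
  shows "\<exists>y t. t \<noteq> 0 \<and> poly (map_poly (ev y) p) t \<noteq> 0"
proof -
  obtain k where k: "coeff p k \<noteq> 0" using p by (metis leading_coeff_0_iff)
  obtain y where y: "ev y (coeff p k) \<noteq> 0" using evnz[OF k] by blast
  have "coeff (map_poly (ev y) p) k \<noteq> 0" using y by (simp add: coeff_map_poly ev0)
  hence nz: "map_poly (ev y) p \<noteq> 0" by auto
  have "finite (insert 0 {t. poly (map_poly (ev y) p) t = 0})"
    using poly_roots_finite[OF nz] by simp
  then obtain t where "t \<notin> insert 0 {t. poly (map_poly (ev y) p) t = 0}"
    using alg_closure_infinite ex_new_if_finite by blast
  thus ?thesis by blast
qed

type_synonym 'b R4 = "'b poly poly poly poly"

fun nmon :: "'b::zero \<Rightarrow> mon4 \<Rightarrow> 'b R4" where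
  "nmon c (e0, e1, e2, e3) = monom (monom (monom (monom c e3) e2) e1) e0"

fun coeff4 :: "'b::zero R4 \<Rightarrow> mon4 \<Rightarrow> 'b" where
  "coeff4 p (e0, e1, e2, e3) = coeff (coeff (coeff (coeff p e0) e1) e2) e3"

lemma coeff4_nmon: "coeff4 (nmon c e) m = (if m = e then c else 0)"
  by (cases e, cases m) (auto simp: coeff_monom)

lemma nmon_mult: "nmon (c::'b::comm_semiring_1) e * nmon c' e' = nmon (c * c') (madd e e')"
  by (cases e, cases e') (simp add: mult_monom)

lemma nmon_0: "nmon 0 e = 0" by (cases e) simp

definition E1 :: "'a::field alg_closure \<Rightarrow> 'a poly \<Rightarrow> 'a alg_closure" where
  "E1 y c = poly (map_poly to_ac c) y"
definition E2 :: "'a::field alg_closure \<times> 'a alg_closure \<Rightarrow> 'a poly poly \<Rightarrow> 'a alg_closure" where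
  "E2 y c = poly (map_poly (E1 (snd y)) c) (fst y)"
definition E3 :: "'a::field alg_closure \<times> 'a alg_closure \<times> 'a alg_closure \<Rightarrow> 'a poly poly poly \<Rightarrow> 'a alg_closure" where
  "E3 y c = poly (map_poly (E2 (snd y)) c) (fst y)"
definition E4 :: "'a::field alg_closure pt4 \<Rightarrow> 'a R4 \<Rightarrow> 'a alg_closure" where
  "E4 y c = poly (map_poly (E3 (snd y)) c) (fst y)"

lemma hom_E1: "rhom (E1 y)" unfolding E1_def by (rule hom_map_poly[OF hom_to_ac])
lemma hom_E2: "rhom (E2 y)" unfolding E2_def by (rule hom_map_poly[OF hom_E1])
lemma hom_E3: "rhom (E3 y)" unfolding E3_def by (rule hom_map_poly[OF hom_E2])
lemma hom_E4: "rhom (E4 y)" unfolding E4_def by (rule hom_map_poly[OF hom_E3])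

lemma E4_nmon: "E4 x (nmon c m) = to_ac c * mon_eval m x"
  by (cases x, cases m)
     (simp add: E4_def E3_def E2_def E1_def poly_map_monom hom_E1 hom_E2 hom_E3 hom_to_ac mult_ac)

lemma E4_nz: "p \<noteq> 0 \<Longrightarrow> \<exists>t y1 y2 y3. t \<noteq> 0 \<and> E4 (t, y1, y2, y3) p \<noteq> 0"
proof -
  have 1: "\<exists>y. E1 y c \<noteq> 0" if "c \<noteq> 0" for c :: "'a::field poly"
    using nz_lift[of "\<lambda>(u::unit) x. to_ac x" c] that unfolding E1_def by auto
  have 2: "\<exists>y. E2 y c \<noteq> 0" if "c \<noteq> 0" for c :: "'a::field poly poly"
    using nz_lift[of E1 c] that 1 hom_0[OF hom_E1] unfolding E2_def by auto
  have 3: "\<exists>y. E3 y c \<noteq> 0" if "c \<noteq> 0" for c :: "'a::field poly poly poly"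
    using nz_lift[of E2 c] that 2 hom_0[OF hom_E2] unfolding E3_def by auto
  assume "p \<noteq> 0"
  thus ?thesis
    using nz_lift[of E3 p] 3 hom_0[OF hom_E3] unfolding E4_def by auto
qed




lemma coeff4_add: "coeff4 (p + q) m = coeff4 p m + coeff4 q m"
  by (cases m) simp
lemma coeff4_diff: "coeff4 (p - q) m = coeff4 p m - coeff4 q m"
  by (cases m) simp
lemma coeff4_sum: "coeff4 (sum f A) m = (\<Sum>x\<in>A. coeff4 (f x) m)"
  by (cases m) (simp add: coeff_sum)

lemma coeff4_mult:
  "coeff4 (p * q) (n0, n1, n2, n3) =
    (\<Sum>i0\<le>n0. \<Sum>i1\<le>n1. \<Sum>i2\<le>n2. \<Sum>i3\<le>n3.
       coeff4 p (i0, i1, i2, i3) * coeff4 q (n0 - i0, n1 - i1, n2 - i2, n3 - i3))"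
  by (simp add: coeff_mult coeff_sum)

lemma fin_lift:
  assumes "\<And>c. finite {r. P c r}" "\<And>r. \<not> P 0 r"
  shows "finite {(i, r). P (coeff p i) r}"
proof (rule finite_subset)
  show "{(i, r). P (coeff p i) r} \<subseteq> (SIGMA i:{..degree p}. {r. P (coeff p i) r})"
  proof (safe)
    fix i r assume "P (coeff p i) r"
    hence "coeff p i \<noteq> 0" using assms(2) by metis
    thus "i \<le> degree p" by (rule le_degree)
  qed
  show "finite (SIGMA i:{..degree p}. {r. P (coeff p i) r})"
    using assms(1) by auto
qed

lemma fin_coeff1: "finite {r. coeff (c::'b::zero poly) r \<noteq> 0}"
  by (rule finite_subset[of _ "{..degree c}"]) (auto intro: le_degree)

lemma fin_coeff4: "finite {m. coeff4 (H::'b::zero R4) m \<noteq> 0}"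
proof -
  have f2: "finite {(i, r). (\<lambda>c r. coeff c r \<noteq> 0) (coeff c i) r}" for c :: "'b poly poly"
    by (rule fin_lift) (simp_all add: fin_coeff1)
  have f3: "finite {(i, r). (\<lambda>c (j, k). coeff (coeff c j) k \<noteq> 0) (coeff c i) r}" for c :: "'b poly poly poly"
    by (rule fin_lift) (use f2 in auto)
  have f4: "finite {(i, r). (\<lambda>c (j, k, l). coeff (coeff (coeff c j) k) l \<noteq> 0) (coeff H i) r}"
    by (rule fin_lift) (use f3 in \<open>auto simp: case_prod_unfold\<close>)
  have "{m. coeff4 H m \<noteq> 0} = {(i, r). (\<lambda>c (j, k, l). coeff (coeff (coeff c j) k) l \<noteq> 0) (coeff H i) r}"
    by auto
  with f4 show ?thesis by simp
qed

lemma sum_pairs: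
  "(\<Sum>(i, j)\<in>{(i, j). madd i j = (n0, n1, n2, n3)}. f i j) =
    (\<Sum>i0\<le>n0. \<Sum>i1\<le>n1. \<Sum>i2\<le>n2. \<Sum>i3\<le>n3. f (i0, i1, i2, i3) (n0 - i0, n1 - i1, n2 - i2, n3 - i3))"
proof -
  define B where "B = {..n0} \<times> {..n1} \<times> {..n2} \<times> {..n3}"
  define g where "g = (\<lambda>(i0::nat, i1::nat, i2::nat, i3::nat). ((i0, i1, i2, i3), (n0 - i0, n1 - i1, n2 - i2, n3 - i3)))"
  have "{(i, j). madd i j = (n0, n1, n2, n3)} = g ` B"
  proof (intro equalityI subsetI)
    fix x assume "x \<in> {(i, j). madd i j = (n0, n1, n2, n3)}"
    then obtain i j where ij: "x = (i, j)" "madd i j = (n0, n1, n2, n3)" by auto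
    obtain i0 i1 i2 i3 where i: "i = (i0, i1, i2, i3)" by (cases i) auto
    obtain j0 j1 j2 j3 where j: "j = (j0, j1, j2, j3)" by (cases j) auto
    have x: "x = ((i0,i1,i2,i3),(j0,j1,j2,j3))"
      "i0 + j0 = n0" "i1 + j1 = n1" "i2 + j2 = n2" "i3 + j3 = n3"
      using ij i j by auto
    thus "x \<in> g ` B" unfolding B_def g_def
      by (intro image_eqI[of _ _ "(i0,i1,i2,i3)"]) auto
  next
    fix x assume "x \<in> g ` B"
    thus "x \<in> {(i, j). madd i j = (n0, n1, n2, n3)}" unfolding B_def g_def by auto
  qed
  moreover have "inj_on g B" unfolding g_def inj_on_def by auto
  ultimately have "(\<Sum>(i, j)\<in>{(i, j). madd i j = (n0, n1, n2, n3)}. f i j) = (\<Sum>x\<in>B. (case_prod f) (g x))"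
    by (simp add: sum.reindex)
  also have "\<dots> = (\<Sum>i0\<le>n0. \<Sum>i1\<le>n1. \<Sum>i2\<le>n2. \<Sum>i3\<le>n3. f (i0, i1, i2, i3) (n0 - i0, n1 - i1, n2 - i2, n3 - i3))"
    unfolding B_def g_def by (simp add: sum.cartesian_product) (intro sum.cong refl, auto split: prod.splits)
  finally show ?thesis .
qed

lemma coeff4_mult_pairs:
  "coeff4 (p * q) m = (\<Sum>(i, j)\<in>{(i, j). madd i j = m}. coeff4 p i * coeff4 q j)"
  by (cases m) (simp only: coeff4_mult sum_pairs)




declare nmon.simps[simp del]

lemma finite_MD: "finite (monomials_of_deg s)"
proof (rule finite_subset)
  show "monomials_of_deg s \<subseteq> {..s} \<times> {..s} \<times> {..s} \<times> {..s}"
    unfolding monomials_of_deg_def by (auto)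
qed auto

lemma nmon_power: "nmon (1::'b::comm_semiring_1) (1,0,0,1) ^ k = nmon 1 (k,0,0,k)"
proof (induction k)
  case 0 show ?case by (simp add: nmon.simps monom_eq_1)
next
  case (Suc k)
  thus ?case by (simp add: nmon_mult mult.commute)
qed

context ell
begin

definition W4 :: "'a R4" where "W4 = nmon 1 (1,0,0,1)"
definition Q4 :: "'a R4" where "Q4 = nmon a (0,2,0,0) + nmon b (0,1,1,0) + nmon c (0,0,2,0)"
definition D4 :: "'a R4" where "D4 = W4 - Q4"

definition toR :: "nat \<Rightarrow> 'a mpoly4 \<Rightarrow> 'a R4" where
  "toR s F = (\<Sum>m\<in>monomials_of_deg s. nmon (F m) m)"

definition Ftil :: "nat \<Rightarrow> 'a mpoly4 \<Rightarrow> 'a R4" where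
  "Ftil s F = (\<Sum>m\<in>monomials_of_deg s.
     (case m of (e0, e1, e2, e3) \<Rightarrow> nmon (F m) (s + e0 - e3, e1, e2, 0) * Q4 ^ e3))"

lemma step_a: "D4 dvd (nmon 1 (s,0,0,0) * toR s F - Ftil s F)"
proof -
  have "nmon 1 (s,0,0,0) * toR s F - Ftil s F =
     (\<Sum>m\<in>monomials_of_deg s. nmon 1 (s,0,0,0) * nmon (F m) m -
        (case m of (e0, e1, e2, e3) \<Rightarrow> nmon (F m) (s + e0 - e3, e1, e2, 0) * Q4 ^ e3))"
    unfolding toR_def Ftil_def by (simp add: sum_distrib_left sum_subtractf)
  also have "D4 dvd \<dots>"
  proof (rule dvd_sum)
    fix m assume m: "m \<in> monomials_of_deg s"
    obtain e0 e1 e2 e3 where me: "m = (e0,e1,e2,e3)" by (cases m) auto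
    have e3: "e3 \<le> s" using m me by (simp add: monomials_of_deg_def)
    have wp: "W4 ^ e3 = nmon 1 (e3,0,0,e3)" unfolding W4_def by (rule nmon_power)
    have "nmon 1 (s,0,0,0) * nmon (F m) m = nmon (F m) (s + e0 - e3, e1, e2, 0) * W4 ^ e3"
      unfolding wp using e3 by (simp add: me nmon_mult)
    hence "nmon 1 (s,0,0,0) * nmon (F m) m -
        (case m of (e0, e1, e2, e3) \<Rightarrow> nmon (F m) (s + e0 - e3, e1, e2, 0) * Q4 ^ e3) =
        nmon (F m) (s + e0 - e3, e1, e2, 0) * (W4 ^ e3 - Q4 ^ e3)"
      by (simp add: me right_diff_distrib)
    moreover have "D4 dvd W4 ^ e3 - Q4 ^ e3"
      unfolding D4_def power_diff_sumr2 by simp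
    ultimately show "D4 dvd nmon 1 (s,0,0,0) * nmon (F m) m -
        (case m of (e0, e1, e2, e3) \<Rightarrow> nmon (F m) (s + e0 - e3, e1, e2, 0) * Q4 ^ e3)"
      by simp
  qed
  finally show ?thesis .
qed

definition QL :: "'a alg_closure \<Rightarrow> 'a alg_closure \<Rightarrow> 'a alg_closure" where
  "QL y1 y2 = to_ac a * y1^2 + to_ac b * y1 * y2 + to_ac c * y2^2"

lemma E4_Q4: "E4 (t, y1, y2, y3) Q4 = QL y1 y2"
  unfolding Q4_def QL_def
  by (simp add: hom_add[OF hom_E4] E4_nmon mult_ac)

lemma E4_Ftil: "E4 (t, y1, y2, y3) (Ftil s F) =
   (\<Sum>m\<in>monomials_of_deg s. (case m of (e0, e1, e2, e3) \<Rightarrow>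
      to_ac (F m) * (t ^ (s + e0 - e3) * y1 ^ e1 * y2 ^ e2) * QL y1 y2 ^ e3))"
  unfolding Ftil_def hom_sum[OF hom_E4]
proof (rule sum.cong[OF refl])
  fix m :: mon4
  obtain e0 e1 e2 e3 where me: "m = (e0,e1,e2,e3)" by (cases m) auto
  show "E4 (t, y1, y2, y3) (case m of (e0, e1, e2, e3) \<Rightarrow> nmon (F m) (s + e0 - e3, e1, e2, 0) * Q4 ^ e3) =
    (case m of (e0, e1, e2, e3) \<Rightarrow> to_ac (F m) * (t ^ (s + e0 - e3) * y1 ^ e1 * y2 ^ e2) * QL y1 y2 ^ e3)"
    by (simp add: me hom_mult[OF hom_E4] hom_power[OF hom_E4] E4_nmon E4_Q4 mult_ac)
qed

lemma step_b:
  assumes van: "\<And>y1 y2. hevalL s F (1, y1, y2, QL y1 y2) = 0"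
  shows "Ftil s F = 0"
proof (rule ccontr)
  assume "Ftil s F \<noteq> 0"
  then obtain t y1 y2 y3 where t: "t \<noteq> 0" and nz: "E4 (t, y1, y2, y3) (Ftil s F) \<noteq> 0"
    using E4_nz by blast
  have "E4 (t, y1, y2, y3) (Ftil s F) = t ^ (2 * s) * hevalL s F (1, y1 / t, y2 / t, QL (y1/t) (y2/t))"
    unfolding E4_Ftil hevalL_def sum_distrib_left
  proof (rule sum.cong[OF refl])
    fix m assume m: "m \<in> monomials_of_deg s"
    obtain e0 e1 e2 e3 where me: "m = (e0,e1,e2,e3)" by (cases m) auto
    have es: "e0 + e1 + e2 + e3 = s" using m me by (simp add: monomials_of_deg_def)
    have ql: "QL (y1/t) (y2/t) = QL y1 y2 / t^2"
      unfolding QL_def using t by (simp add: field_simps power2_eq_square)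
    have tt: "t ^ (2 * s) = t ^ (s + e0 - e3) * t ^ e1 * t ^ e2 * (t^2) ^ e3"
    proof -
      have ex: "2 * s = (s + e0 - e3) + e1 + e2 + 2 * e3" using es by linarith
      show ?thesis by (simp only: ex power_add power_mult)
    qed
    show "(case m of (e0, e1, e2, e3) \<Rightarrow>
      to_ac (F m) * (t ^ (s + e0 - e3) * y1 ^ e1 * y2 ^ e2) * QL y1 y2 ^ e3) =
      t ^ (2 * s) * (to_ac (F m) * mon_eval m (1, y1 / t, y2 / t, QL (y1 / t) (y2 / t)))"
      unfolding me tt ql using t
      by (simp add: power_divide field_simps)
  qed
  also have "\<dots> = 0" using van by simp
  finally show False using nz by simp
qed

lemma coeff_D4_0: "coeff D4 0 \<noteq> 0"
proof
  assume "coeff D4 0 = 0"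
  hence "coeff4 D4 (0,2,0,0) = 0" by simp
  moreover have "coeff4 D4 (0,2,0,0) = - a"
    unfolding D4_def W4_def Q4_def by (simp only: coeff4_diff coeff4_add coeff4_nmon) simp
  ultimately show False using a_nz by simp
qed

lemma cancel1: "D4 dvd pCons 0 A \<Longrightarrow> D4 dvd A"
proof -
  assume "D4 dvd pCons 0 A"
  then obtain H where H: "pCons 0 A = D4 * H" by (auto elim: dvdE)
  have "coeff (D4 * H) 0 = 0" using H[symmetric] by simp
  hence "coeff H 0 = 0" using coeff_D4_0 by (simp add: coeff_mult)
  then obtain H' where H': "H = pCons 0 H'" by (metis pCons_cases coeff_pCons_0)
  have "pCons 0 A = pCons 0 (D4 * H')" using H H' by (simp add: mult_pCons_right)
  hence "A = D4 * H'" by simp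
  thus ?thesis by simp
qed

lemma cancel: "D4 dvd nmon 1 (k,0,0,0) * A \<Longrightarrow> D4 dvd A"
proof (induction k arbitrary: A)
  case 0 thus ?case by (simp add: nmon.simps monom_eq_1)
next
  case (Suc k)
  have "nmon 1 (Suc k,0,0,0) * A = pCons 0 (nmon 1 (k,0,0,0) * A)"
    by (simp add: nmon.simps monom_Suc monom_eq_1 mult_pCons_left)
  with Suc show ?case using cancel1 by metis
qed

lemma coeff4_D4: "coeff4 D4 m = quadric_poly a b c m"
  unfolding D4_def W4_def Q4_def quadric_poly_def
  by (simp add: coeff4_diff coeff4_add coeff4_nmon)

lemma coeff4_toR:
  assumes "homog_poly s F"
  shows "coeff4 (toR s F) m = F m"
proof -
  have "coeff4 (toR s F) m = (\<Sum>e\<in>monomials_of_deg s. if m = e then F e else 0)"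
    unfolding toR_def by (simp add: coeff4_sum coeff4_nmon)
  also have "\<dots> = (if m \<in> monomials_of_deg s then F m else 0)"
    using finite_MD by (simp add: sum.delta)
  also have "\<dots> = F m" using assms unfolding homog_poly_def monomials_of_deg_def by (cases m) auto
  finally show ?thesis .
qed

lemma step_d:
  assumes "homog_poly s F" and "toR s F = D4 * H"
  shows "pdvd (quadric_poly a b c) F"
  unfolding pdvd_def
proof (intro exI conjI)
  show "finite {m. coeff4 H m \<noteq> 0}" by (rule fin_coeff4)
  show "F = pmult (quadric_poly a b c) (coeff4 H)"
  proof
    fix m
    have "F m = coeff4 (D4 * H) m" using assms coeff4_toR by metis
    also have "\<dots> = pmult (quadric_poly a b c) (coeff4 H) m"
      unfolding coeff4_mult_pairs pmult_def coeff4_D4 ..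
    finally show "F m = pmult (quadric_poly a b c) (coeff4 H) m" .
  qed
qed

lemma divisibility:
  assumes "homog_poly s F" and van: "\<And>y1 y2. hevalL s F (1, y1, y2, QL y1 y2) = 0"
  shows "pdvd (quadric_poly a b c) F"
proof -
  have "D4 dvd nmon 1 (s,0,0,0) * toR s F"
    using step_a[of s F] step_b[OF van] by simp
  hence "D4 dvd toR s F" by (rule cancel)
  then obtain H where "toR s F = D4 * H" by (auto elim: dvdE)
  thus ?thesis by (rule step_d[OF assms(1)])
qed

end



definition cls :: "'a::field pt4 \<Rightarrow> 'a pt4 set" where
  "cls x = {smult4 t x | t. t \<noteq> 0}"

lemma smult4_smult4: "smult4 u (smult4 t x) = smult4 (u * t) (x::'a::field pt4)"
  by (cases x) (simp add: mult.assoc)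

lemma cls_smult: "(t::'a::field) \<noteq> 0 \<Longrightarrow> cls (smult4 t x) = cls x"
  unfolding cls_def
proof (intro equalityI subsetI)
  fix y assume "t \<noteq> 0" "y \<in> {smult4 u (smult4 t x) |u. u \<noteq> 0}"
  thus "y \<in> {smult4 u x |u. u \<noteq> 0}" by (auto simp: smult4_smult4)
next
  fix y assume t: "t \<noteq> 0" and "y \<in> {smult4 u x |u. u \<noteq> 0}"
  then obtain u where "y = smult4 u x" "u \<noteq> 0" by auto
  hence "y = smult4 (u / t) (smult4 t x)" "u / t \<noteq> 0" using t by (auto simp: smult4_smult4)
  thus "y \<in> {smult4 u (smult4 t x) |u. u \<noteq> 0}" by blast
qed

lemma smult4_mem: "(t::'a::field) \<noteq> 0 \<Longrightarrow> smult4 t x \<in> cls x"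
  unfolding cls_def by blast

lemma heval_quadric:
  "heval 2 (quadric_poly a b c) (x0, x1, x2, x3) = x0 * x3 - (a * x1^2 + b * x1 * x2 + c * x2^2)"
proof -
  let ?S = "{(1,0,0,1), (0,2,0,0), (0,1,1,0), (0,0,2,0)} :: mon4 set"
  have "heval 2 (quadric_poly a b c) (x0, x1, x2, x3) =
     (\<Sum>m\<in>?S. quadric_poly a b c m * mon_eval m (x0, x1, x2, x3))"
    unfolding heval_def
    by (rule sum.mono_neutral_right[OF finite_MD]) (auto simp: monomials_of_deg_def quadric_poly_def)
  also have "\<dots> = x0 * x3 - (a * x1^2 + b * x1 * x2 + c * x2^2)"
    by (simp add: quadric_poly_def algebra_simps)
  finally show ?thesis .
qed

lemma heval_P0: "heval s F (0, 0, 0, 1) = F (0, 0, 0, s)"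
proof -
  have "heval s F (0, 0, 0, 1) = (\<Sum>m\<in>{(0,0,0,s)}. F m * mon_eval m (0, 0, 0, 1))"
    unfolding heval_def
  proof (rule sum.mono_neutral_right[OF finite_MD])
    show "{(0, 0, 0, s)} \<subseteq> monomials_of_deg s" by (simp add: monomials_of_deg_def)
    show "\<forall>m\<in>monomials_of_deg s - {(0, 0, 0, s)}. F m * mon_eval m (0, 0, 0, 1) = 0"
    proof
      fix m assume m: "m \<in> monomials_of_deg s - {(0, 0, 0, s)}"
      obtain e0 e1 e2 e3 where me: "m = (e0,e1,e2,e3)" by (cases m) auto
      from m me have "e0 \<noteq> 0 \<or> e1 \<noteq> 0 \<or> e2 \<noteq> 0" by (auto simp: monomials_of_deg_def)
      thus "F m * mon_eval m (0, 0, 0, 1) = 0" by (auto simp: me zero_power)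
    qed
  qed
  thus ?thesis by simp
qed

lemma mon_eval_to_ac:
  "mon_eval m (to_ac x0, to_ac x1, to_ac x2, to_ac x3) = to_ac (mon_eval m (x0, x1, x2, x3))"
  by (cases m) simp

context ell
begin

lemma hevalL_to_ac:
  "hevalL s F (to_ac x0, to_ac x1, to_ac x2, to_ac x3) = to_ac (heval s F (x0, x1, x2, x3))"
  unfolding hevalL_def heval_def by (simp add: to_ac_sum mon_eval_to_ac)

definition Qa :: "'a \<Rightarrow> 'a \<Rightarrow> 'a" where "Qa y1 y2 = a * y1^2 + b * y1 * y2 + c * y2^2"

lemma QL_fact: "QL y1 y2 = to_ac a * (y1 - \<omega> * y2) * (y1 - \<omega>' * y2)"
  unfolding QL_def vieta1 vieta2 by (simp add: algebra_simps power2_eq_square)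

lemma P_nz:
  assumes rhom: "homog_poly s F" and nd: "\<not> pdvd (quadric_poly a b c) F"
  shows "Pp s F \<noteq> 0"
proof
  assume P0: "Pp s F = 0"
  have "hevalL s F (1, y1, y2, QL y1 y2) = 0" for y1 y2
  proof -
    define z where "z = y1 - \<omega> * y2"
    define w where "w = y1 - \<omega>' * y2"
    have wz: "(w - z) / d = y2" unfolding z_def w_def d_def using d_nz[unfolded d_def]
      by (simp add: field_simps)
    have "poly (poly (Pp s F) [:w:]) z = 0" using P0 by simp
    hence "hevalL s F (1, z + \<omega> * ((w - z) / d), (w - z) / d, to_ac a * z * w) = 0"
      unfolding eval_P by simp
    moreover have "z + \<omega> * ((w - z) / d) = y1" by (simp only: wz) (simp add: z_def)
    moreover have "to_ac a * z * w = QL y1 y2" unfolding QL_fact z_def w_def ..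
    ultimately show ?thesis using wz by simp
  qed
  with divisibility[OF rhom] nd show False by blast
qed

definition zmap :: "'a \<times> 'a \<Rightarrow> 'a alg_closure" where
  "zmap y = to_ac (fst y) - \<omega> * to_ac (snd y)"

lemma inj_zmap: "inj zmap"
proof (rule injI)
  fix y y' assume e: "zmap y = zmap y'"
  show "y = y'"
  proof (cases "snd y = snd y'")
    case True thus ?thesis using e by (simp add: zmap_def prod_eq_iff)
  next
    case False
    from e have "to_ac (fst y - fst y') = \<omega> * to_ac (snd y - snd y')"
      by (simp add: zmap_def algebra_simps)
    hence "\<omega> = to_ac ((fst y - fst y') / (snd y - snd y'))"
      using False by (simp add: field_simps)
    thus ?thesis using \<omega>_notin by blast
  qed
qed

lemma zmap_frob: "zmap y ^ q = to_ac (fst y) - \<omega>' * to_ac (snd y)"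
  unfolding zmap_def q_def \<omega>'_def by (simp add: frob_diff power_mult_distrib frob_to_ac)

lemma G_root:
  assumes "heval s F (1, fst y, snd y, Qa (fst y) (snd y)) = 0"
  shows "poly (poly (Pp s F) (monom 1 q)) (zmap y) = 0"
proof -
  let ?z = "zmap y"
  have pz: "poly (monom 1 q) ?z = to_ac (fst y) - \<omega>' * to_ac (snd y)"
    by (simp add: poly_monom zmap_frob)
  have wz: "(poly (monom 1 q) ?z - ?z) / d = to_ac (snd y)"
    unfolding pz unfolding zmap_def d_def using d_nz[unfolded d_def] by (simp add: field_simps)
  have 1: "?z + \<omega> * to_ac (snd y) = to_ac (fst y)" by (simp add: zmap_def)
  have 3: "to_ac a * ?z * poly (monom 1 q) ?z = to_ac (Qa (fst y) (snd y))"
    unfolding pz unfolding zmap_def Qa_def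
    using QL_fact[of "to_ac (fst y)" "to_ac (snd y)"] by (simp add: QL_def)
  show ?thesis
    unfolding eval_P wz 1 3
    using hevalL_to_ac[of s F 1 "fst y" "snd y" "Qa (fst y) (snd y)"] assms by simp
qed

lemma X_sub:
  "X_points a b c s F \<subseteq>
     (\<lambda>y. cls (1, fst y, snd y, Qa (fst y) (snd y))) ` {y. heval s F (1, fst y, snd y, Qa (fst y) (snd y)) = 0}
     \<union> (if heval s F (0,0,0,1) = 0 then {cls (0,0,0,1)} else {})" (is "_ \<subseteq> ?R")
proof
  fix P assume P: "P \<in> X_points a b c s F"
  then obtain x where Px: "P = cls x" and xnz: "x \<noteq> (0,0,0,0)"
    and allP: "\<forall>x'\<in>P. heval 2 (quadric_poly a b c) x' = 0 \<and> heval s F x' = 0"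
    unfolding X_points_def proj_points3_def cls_def by blast
  obtain x0 x1 x2 x3 where xe: "x = (x0,x1,x2,x3)" by (cases x) auto
  have "x \<in> P" using Px smult4_mem[of 1 x] by (cases x) simp
  hence "heval 2 (quadric_poly a b c) x = 0" using allP by blast
  hence qx: "x0 * x3 = a * x1^2 + b * x1 * x2 + c * x2^2" using xe heval_quadric[of a b c] by simp
  show "P \<in> ?R"
  proof (cases "x0 = 0")
    case False
    define y where "y = (x1 / x0, x2 / x0)"
    have Qy: "Qa (fst y) (snd y) = x3 / x0"
      unfolding y_def Qa_def using False qx
      by (simp add: field_simps power2_eq_square)
    have sm: "smult4 (1/x0) x = (1, fst y, snd y, Qa (fst y) (snd y))"
      unfolding Qy using False by (simp add: xe y_def)
    have "smult4 (1/x0) x \<in> P" using Px smult4_mem[of "1/x0" x] False by simp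
    hence "heval s F (1, fst y, snd y, Qa (fst y) (snd y)) = 0" using allP sm by metis
    moreover have "P = cls (1, fst y, snd y, Qa (fst y) (snd y))"
      using Px cls_smult[of "1/x0" x] False sm by simp
    ultimately show ?thesis by blast
  next
    case True
    hence "x1 = 0 \<and> x2 = 0" using qx aniso[of x1 x2] by (simp add: mult.assoc)
    with True xe xnz have x3: "x3 \<noteq> 0" and xx: "x = (0,0,0,x3)" by auto
    have sm: "smult4 (1/x3) x = (0,0,0,1)" using x3 xx by simp
    have "smult4 (1/x3) x \<in> P" using Px smult4_mem[of "1/x3" x] x3 by simp
    hence "heval s F (0,0,0,1) = 0" using allP sm by metis
    moreover have "P = cls (0,0,0,1)" using Px cls_smult[of "1/x3" x] x3 sm by simp
    ultimately show ?thesis by simp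
  qed
qed

end



context ell
begin

theorem main:
  assumes sq: "s + 1 < q" and rhom: "homog_poly s F" and nd: "\<not> pdvd (quadric_poly a b c) F"
  shows "card (X_points a b c s F) \<le> s * (q + 1)"
proof -
  define P where "P = Pp s F"
  define G where "G = poly P (monom 1 q)"
  have bnd: "\<And>i j. coeff (coeff P j) i \<noteq> 0 \<Longrightarrow> i \<le> s \<and> j \<le> s"
    unfolding P_def by (rule P_bnd)
  have sq': "s < q" using sq by simp
  have Gnz: "G \<noteq> 0" unfolding G_def using G_props(2)[OF bnd sq'] P_nz[OF rhom nd] P_def by blast
  have Gdeg: "degree G \<le> s + q * s" unfolding G_def using G_props(1)[OF bnd sq'] .
  have Gtop: "coeff G (s + q * s) = coeff (coeff P s) s" unfolding G_def using G_props(3)[OF bnd sq'] .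
  define Z where "Z = {y. heval s F (1, fst y, snd y, Qa (fst y) (snd y)) = 0}"
  have "zmap ` Z \<subseteq> {w. poly G w = 0}"
    unfolding Z_def G_def P_def using G_root by blast
  hence "card (zmap ` Z) \<le> card {w. poly G w = 0}"
    by (rule card_mono[OF poly_roots_finite[OF Gnz]])
  moreover have "card (zmap ` Z) = card Z" using inj_zmap by (simp add: card_image inj_on_subset)
  moreover have "card {w. poly G w = 0} \<le> degree G" by (rule card_poly_roots_bound[OF Gnz])
  ultimately have cZ: "card Z \<le> degree G" by simp
  define E where "E = (if heval s F (0,0,0,1) = 0 then {cls (0,0,0,1::'a)} else {})"
  have cZE: "card Z + card E \<le> s + q * s"
  proof (cases "heval s F (0,0,0,1) = 0")
    case True
    hence "F (0,0,0,s) = 0" by (simp add: heval_P0)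
    hence "coeff G (s + q * s) = 0" using Gtop P_top unfolding P_def by simp
    hence "degree G \<noteq> s + q * s" using Gnz by (metis leading_coeff_0_iff)
    hence "degree G < s + q * s" using Gdeg by simp
    thus ?thesis using cZ True by (simp add: E_def)
  next
    case False thus ?thesis using cZ Gdeg by (simp add: E_def)
  qed
  have "X_points a b c s F \<subseteq> (\<lambda>y. cls (1, fst y, snd y, Qa (fst y) (snd y))) ` Z \<union> E"
    using X_sub unfolding Z_def E_def .
  hence "card (X_points a b c s F) \<le> card ((\<lambda>y. cls (1, fst y, snd y, Qa (fst y) (snd y))) ` Z \<union> E)"
    by (rule card_mono[rotated]) (simp add: E_def)
  also have "\<dots> \<le> card ((\<lambda>y. cls (1, fst y, snd y, Qa (fst y) (snd y))) ` Z) + card E"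
    by (rule card_Un_le)
  also have "\<dots> \<le> card Z + card E"
    using card_image_le[of Z] by simp
  also have "\<dots> \<le> s * (q + 1)" using cZE by (simp add: algebra_simps)
  finally show ?thesis .
qed

end

theorem corollary3p7:
  fixes a b c :: "'a::{finite, field}" and s :: nat and F :: "'a mpoly4"
  assumes "irred_qform a b c"
    and "int s < int CARD('a) - 1"
    and "homog_poly s F"
    and "F \<noteq> (\<lambda>_. 0)"
    and "\<not> pdvd (quadric_poly a b c) F"
  shows "card (X_points a b c s F) \<le> s * (CARD('a) + 1)"
proof -
  interpret ell a b c by unfold_locales (rule assms(1))
  have "s + 1 < q" using assms(2) unfolding q_def by linarith
  from main[OF this assms(3) assms(5)] show ?thesis unfolding q_def .
qed


end
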